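(* Let $x,y$ be distinct odd primes and let $z$ be an odd positive integer divisible by $y$ and coprime to $x$. If $x$ is not balanced modulo $z$, then $x$ is not balanced modulo $yz$.
   Context: For positive integers $n,m$ with $\gcd(n,m)=1$, $n$ is said to be not balanced modulo $m$ iff there exists an odd Dirichlet character $\chi$ modulo $m$ (i.e. $\chi(-1)=-1$) such that $\chi(n)=1$ and $\sum_{0<k<m/2}\chi(k)\neq0$; otherwise $n$ is balanced modulo $m$. *)

theory Defs
  imports Complex_Main "HOL-Number_Theory.Number_Theory"
begin

definition dirichlet_char :: "nat \<Rightarrow> (nat \<Rightarrow> complex) \<Rightarrow> bool" where
  "dirichlet_char m \<chi> \<longleftrightarrow> m > 0 \<and> \<chi> 1 = 1 \<and>
     (\<forall>a b. \<chi> (a * b) = \<chi> a * \<chi> b) \<and>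
     (\<forall>a. \<chi> (a + m) = \<chi> a) \<and>
     (\<forall>a. \<chi> a \<noteq> 0 \<longleftrightarrow> coprime a m)"

text \<open>Odd character: chi(-1) = -1, i.e. chi(m-1) = -1 by periodicity.\<close>
definition odd_char :: "nat \<Rightarrow> (nat \<Rightarrow> complex) \<Rightarrow> bool" where
  "odd_char m \<chi> \<longleftrightarrow> \<chi> (m - 1) = -1"

definition not_balanced :: "nat \<Rightarrow> nat \<Rightarrow> bool" where
  "not_balanced n m \<longleftrightarrow> (\<exists>\<chi>. dirichlet_char m \<chi> \<and> odd_char m \<chi> \<and> \<chi> n = 1 \<and>
      (\<Sum>k\<in>{k. 0 < k \<and> 2 * k < m}. \<chi> k) \<noteq> 0)"

definition balanced :: "nat \<Rightarrow> nat \<Rightarrow> bool" where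
  "balanced n m \<longleftrightarrow> \<not> not_balanced n m"

end

theory Submission
  imports Defs
begin

lemma per_mult:
  fixes a j m :: nat
  assumes "\<forall>a. \<chi> (a + m) = (\<chi> a :: complex)"
  shows "\<chi> (a + j * m) = \<chi> a"
proof (induction j)
  case 0 then show ?case by simp
next
  case (Suc j)
  have "a + Suc j * m = (a + j * m) + m" by simp
  then show ?case using assms Suc by metis
qed

lemma shift_sum:
  fixes n m :: nat
  assumes "\<forall>a. \<chi> (a + m) = (\<chi> a :: complex)"
  shows "(\<Sum>i<m. \<chi> (n + i)) = (\<Sum>i<m. \<chi> i)"
proof (induction n)
  case 0 then show ?case by simp
next
  case (Suc n)
  have "(\<Sum>i<Suc m. \<chi> (n + i)) = \<chi> n + (\<Sum>i<m. \<chi> (Suc n + i))"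
    by (subst sum.lessThan_Suc_shift) simp
  moreover have "(\<Sum>i<Suc m. \<chi> (n + i)) = (\<Sum>i<m. \<chi> (n + i)) + \<chi> (n + m)"
    by simp
  moreover have "\<chi> (n + m) = \<chi> n" using assms by simp
  ultimately show ?case using Suc by simp
qed

lemma split_sum:
  "(\<Sum>k<n + m. (f::nat\<Rightarrow>complex) k) = (\<Sum>k<n. f k) + (\<Sum>i<m. f (n + i))"
  by (induction m) (simp_all add: add.assoc)

lemma full_zero:
  assumes dc: "dirichlet_char z \<chi>" and oc: "odd_char z \<chi>"
  shows "(\<Sum>k<z. \<chi> k) = 0"
proof -
  have per: "\<forall>a. \<chi> (a + z) = \<chi> a" and mult: "\<forall>a b. \<chi> (a * b) = \<chi> a * \<chi> b"
    and zpos: "z > 0"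
    using dc unfolding dirichlet_char_def by auto
  have m1: "\<chi> (z - 1) = -1" using oc unfolding odd_char_def .
  have refl: "\<chi> (z - Suc k) = - \<chi> (k + 1)" if "k < z" for k
  proof -
    have "(k+1) * (z-1) = (z - Suc k) + k * z" using that
      by (simp add: algebra_simps diff_mult_distrib2)
    then have "\<chi> ((k+1) * (z-1)) = \<chi> (z - Suc k)" using per_mult[OF per] by metis
    moreover have "\<chi> ((k+1) * (z-1)) = - \<chi> (k+1)" using mult m1 by (metis mult.commute mult_minus1_right)
    ultimately show ?thesis by simp
  qed
  have "(\<Sum>k<z. \<chi> k) = (\<Sum>k<z. \<chi> (z - Suc k))"
    by (rule sum.nat_diff_reindex[symmetric])
  also have "\<dots> = (\<Sum>k<z. - \<chi> (1 + k))" by (intro sum.cong) (auto simp: refl)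
  also have "\<dots> = - (\<Sum>k<z. \<chi> (1 + k))" by (simp add: sum_negf)
  also have "\<dots> = - (\<Sum>k<z. \<chi> k)" using shift_sum[OF per, of 1] by simp
  finally show ?thesis by simp
qed

lemma periodic_A:
  assumes dc: "dirichlet_char z \<chi>" and oc: "odd_char z \<chi>"
  shows "(\<Sum>k<n + j * z. \<chi> k) = (\<Sum>k<n. \<chi> k)"
proof (induction j)
  case 0 then show ?case by simp
next
  case (Suc j)
  have per: "\<forall>a. \<chi> (a + z) = \<chi> a" using dc unfolding dirichlet_char_def by auto
  have "n + Suc j * z = (n + j * z) + z" by simp
  then have "(\<Sum>k<n + Suc j * z. \<chi> k) = (\<Sum>k<n + j*z. \<chi> k) + (\<Sum>i<z. \<chi> (n + j*z + i))"
    using split_sum by metis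
  also have "(\<Sum>i<z. \<chi> (n + j*z + i)) = 0"
    using shift_sum[OF per] full_zero[OF dc oc] by simp
  finally show ?case using Suc by simp
qed

lemma half_sum:
  fixes m :: nat
  assumes "\<chi> 0 = (0::complex)" "odd m"
  shows "(\<Sum>k\<in>{k. 0 < k \<and> 2 * k < m}. \<chi> k) = (\<Sum>k<(m+1) div 2. \<chi> k)"
proof -
  have "{k. 0 < k \<and> 2 * k < m} = {..<(m+1) div 2} - {0}" using assms(2)
    by (auto elim!: oddE)
  then show ?thesis using assms(1)
    by (simp add: sum_diff1)
qed

theorem lemma4p7:
  fixes x y z :: nat
  assumes "prime x" "prime y" "odd x" "odd y" "x \<noteq> y"
    and "odd z" "z > 0" "y dvd z" "coprime x z"
    and "not_balanced x z"
  shows "not_balanced x (y * z)"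
proof -
  obtain \<chi> where dc: "dirichlet_char z \<chi>" and oc: "odd_char z \<chi>" and cx: "\<chi> x = 1"
    and S: "(\<Sum>k\<in>{k. 0 < k \<and> 2 * k < z}. \<chi> k) \<noteq> 0"
    using assms(10) unfolding not_balanced_def by blast
  have per: "\<forall>a. \<chi> (a + z) = \<chi> a" and cop: "\<forall>a. \<chi> a \<noteq> 0 \<longleftrightarrow> coprime a z"
    using dc unfolding dirichlet_char_def by auto
  have y1: "y > 1" using assms(2) prime_gt_1_nat by blast
  have z1: "z \<noteq> 1" using assms(8) y1 by auto
  have c0: "\<chi> 0 = 0" proof -
    have "\<not> coprime (0::nat) z" using z1 by simp
    then show ?thesis using cop by blast
  qed
  have coy: "coprime a (y*z) \<longleftrightarrow> coprime a z" for a
    using assms(8) by (metis coprime_commute coprime_mult_left_iff coprime_imp_coprime dvd_trans dvd_refl)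
  have dc2: "dirichlet_char (y*z) \<chi>"
    unfolding dirichlet_char_def
  proof (intro conjI allI)
    show "0 < y*z" using y1 assms(7) by simp
    show "\<chi> (a + y*z) = \<chi> a" for a using per_mult[OF per, of a y] by (simp add: mult.commute)
  qed (use dc coy in \<open>auto simp: dirichlet_char_def\<close>)
  have oc2: "odd_char (y*z) \<chi>"
  proof -
    have "y*z - 1 = (z - 1) + (y - 1) * z" using y1 assms(7)
      by (simp add: algebra_simps diff_mult_distrib)
    then have "\<chi> (y*z - 1) = \<chi> (z - 1)" using per_mult[OF per] by metis
    then show ?thesis using oc unfolding odd_char_def by simp
  qed
  have eq: "(y*z+1) div 2 = (z+1) div 2 + ((y-1) div 2) * z"
    using assms(4,6) by (auto elim!: oddE simp: algebra_simps)
  have "(\<Sum>k\<in>{k. 0 < k \<and> 2 * k < y*z}. \<chi> k) = (\<Sum>k<(y*z+1) div 2. \<chi> k)"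
    using half_sum[where \<chi>=\<chi>, OF c0] assms(4,6) by simp
  also have "\<dots> = (\<Sum>k<(z+1) div 2. \<chi> k)" unfolding eq by (rule periodic_A[OF dc oc])
  also have "\<dots> = (\<Sum>k\<in>{k. 0 < k \<and> 2 * k < z}. \<chi> k)"
    using half_sum[where \<chi>=\<chi>, OF c0] assms(6) by simp
  finally show ?thesis unfolding not_balanced_def using dc2 oc2 cx S by metis
qed

end
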